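(* Every semi-arc visibility graph is planar.
   Context: An arc visibility representation is a finite collection of pairwise disjoint circular arcs, all concentric (centered at a common point $O$). A line of sight is a radial line segment, i.e. a segment contained in a line through $O$ (it may pass through $O$). The arc visibility graph has one vertex per arc, with two vertices adjacent when the two corresponding arcs are joined by a line of sight (having its endpoints on the two arcs) that intersects no other arc. A semi-arc visibility representation is an arc visibility representation in which every arc starts on one common radial ray from $O$ and extends counterclockwise from it; the corresponding graph is a semi-arc visibility graph. *)

theory Defs
  imports "HOL-Analysis.Analysis"
begin

text \<open>The common centre O is the origin of the complex plane (= R^2).\<close>
definition circ_arc :: "real \<Rightarrow> real \<Rightarrow> real \<Rightarrow> complex set" where
  "circ_arc r a l = {complex_of_real r * cis t | t. a \<le> t \<and> t \<le> a + l}"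

definition radial_segment :: "complex \<Rightarrow> complex \<Rightarrow> bool" where
  "radial_segment p q \<longleftrightarrow>
     (\<exists>u. u \<noteq> 0 \<and> closed_segment p q \<subseteq> {complex_of_real t * u | t. True})"

definition arc_vis_rep :: "'v set \<Rightarrow> ('v \<Rightarrow> real) \<Rightarrow> ('v \<Rightarrow> real) \<Rightarrow> ('v \<Rightarrow> real) \<Rightarrow> bool" where
  "arc_vis_rep V r a l \<longleftrightarrow> finite V \<and>
     (\<forall>i\<in>V. 0 < r i \<and> 0 < l i \<and> l i < 2 * pi) \<and>
     (\<forall>i\<in>V. \<forall>j\<in>V. i \<noteq> j \<longrightarrow> circ_arc (r i) (a i) (l i) \<inter> circ_arc (r j) (a j) (l j) = {})"

definition semi_arc_vis_rep :: "'v set \<Rightarrow> ('v \<Rightarrow> real) \<Rightarrow> ('v \<Rightarrow> real) \<Rightarrow> bool" where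
  "semi_arc_vis_rep V r l \<longleftrightarrow> arc_vis_rep V r (\<lambda>_. 0) l"

definition arc_vis_edges :: "'v set \<Rightarrow> ('v \<Rightarrow> real) \<Rightarrow> ('v \<Rightarrow> real) \<Rightarrow> ('v \<Rightarrow> real) \<Rightarrow> 'v set set" where
  "arc_vis_edges V r a l = {{i, j} | i j. i \<in> V \<and> j \<in> V \<and> i \<noteq> j \<and>
     (\<exists>p q. p \<in> circ_arc (r i) (a i) (l i) \<and> q \<in> circ_arc (r j) (a j) (l j) \<and>
        radial_segment p q \<and>
        (\<forall>k\<in>V - {i, j}. closed_segment p q \<inter> circ_arc (r k) (a k) (l k) = {}))}"

definition planar_graph :: "'v set \<Rightarrow> 'v set set \<Rightarrow> bool" where
  "planar_graph V E \<longleftrightarrow>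
     (\<exists>(pos :: 'v \<Rightarrow> complex) (\<gamma> :: 'v set \<Rightarrow> real \<Rightarrow> complex).
        inj_on pos V \<and>
        (\<forall>e\<in>E. \<exists>u v. e = {u, v} \<and> u \<noteq> v \<and> u \<in> V \<and> v \<in> V \<and>
            arc (\<gamma> e) \<and> pathstart (\<gamma> e) = pos u \<and> pathfinish (\<gamma> e) = pos v \<and>
            path_image (\<gamma> e) \<inter> pos ` V = {pos u, pos v}) \<and>
        (\<forall>e\<in>E. \<forall>e'\<in>E. e \<noteq> e' \<longrightarrow>
            path_image (\<gamma> e) \<inter> path_image (\<gamma> e') \<subseteq> pos ` (e \<inter> e')))"

end

theory Submission
  imports Defs
begin


lemma cis_inj:
  assumes "0 \<le> s" "s < 2*pi" "0 \<le> t" "t < 2*pi" "cis s = cis t"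
  shows "s = t"
proof -
  have "sin s = sin t \<and> cos s = cos t" using assms(5)
    by (metis cis.sel(1) cis.sel(2))
  then obtain n :: int where n: "s = t + 2 * pi * n" using sin_cos_eq_iff by blast
  have "(2 * pi) * real_of_int n < (2 * pi) * 1" "(2 * pi) * (-1) < (2 * pi) * real_of_int n" using n assms(1-4) by linarith+
  then have "real_of_int n < 1" "-1 < real_of_int n" using pi_gt_zero mult_less_cancel_left_pos[of "2*pi"] by (metis mult_pos_pos zero_less_numeral)+
  then have "n < 1" "-1 < n" by linarith+
  then have "n = 0" by simp
  then show ?thesis using n by simp
qed

lemma arc_pt:
  assumes "0 < R" "L < 2*pi" "0 \<le> s" "s < 2*pi" "complex_of_real R * cis s \<in> circ_arc R 0 L"
  shows "s \<le> L"
proof -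
  from assms(5) obtain t where t: "0 \<le> t" "t \<le> L" "complex_of_real R * cis s = complex_of_real R * cis t"
    by (auto simp: circ_arc_def)
  then have "cis s = cis t" using assms(1) by simp
  then have "s = t" using cis_inj[of s t] assms t by linarith
  then show ?thesis using t by simp
qed

lemma arc_pt2:
  assumes "0 \<le> s" "s \<le> L"
  shows "complex_of_real R * cis s \<in> circ_arc R 0 L"
  using assms by (auto simp: circ_arc_def)

lemma seg_pt:
  fixes a b c :: real and w :: complex
  assumes "min a b \<le> c" "c \<le> max a b"
  shows "complex_of_real c * w \<in> closed_segment (complex_of_real a * w) (complex_of_real b * w)"
proof -
  have lin: "linear (\<lambda>x::real. complex_of_real x * w)"
    by (rule linearI) (auto simp: algebra_simps scaleR_conv_of_real)
  have "c \<in> closed_segment a b" using assms by (auto simp: closed_segment_eq_real_ivl)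
  then show ?thesis using closed_segment_linear_image[OF lin, of a b] by auto
qed

definition visA :: "'v set \<Rightarrow> ('v\<Rightarrow>real) \<Rightarrow> ('v\<Rightarrow>real) \<Rightarrow> 'v \<Rightarrow> 'v \<Rightarrow> real \<Rightarrow> bool" where
 "visA V r l i j s \<longleftrightarrow> 0 \<le> s \<and> s \<le> l i \<and> s \<le> l j \<and>
   (\<forall>k\<in>V-{i,j}. (r i < r k \<and> r k < r j) \<or> (r j < r k \<and> r k < r i) \<longrightarrow> l k < s)"

definition visB :: "'v set \<Rightarrow> ('v\<Rightarrow>real) \<Rightarrow> ('v\<Rightarrow>real) \<Rightarrow> 'v \<Rightarrow> 'v \<Rightarrow> real \<Rightarrow> bool" where
 "visB V r l i j s \<longleftrightarrow> 0 \<le> s \<and> s \<le> l i \<and> s + pi \<le> l j \<and>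
   (\<forall>k\<in>V-{i,j}. (r k < r i \<longrightarrow> l k < s) \<and> (r k < r j \<longrightarrow> l k < s + pi))"

lemma caseB:
  assumes pos: "\<forall>k\<in>V. 0 < r k \<and> l k < 2*pi"
    and iV: "i \<in> V" and jV: "j \<in> V"
    and s: "0 \<le> s" "s \<le> l i" "s + pi \<le> l j"
    and avoid: "\<forall>k\<in>V - {i, j}. closed_segment (complex_of_real (r i) * cis s) (complex_of_real (r j) * cis (s+pi)) \<inter> circ_arc (r k) 0 (l k) = {}"
  shows "visB V r l i j s"
proof -
  have "\<forall>k\<in>V-{i,j}. (r k < r i \<longrightarrow> l k < s) \<and> (r k < r j \<longrightarrow> l k < s + pi)"
  proof
  fix k assume k: "k \<in> V - {i,j}"
  have q: "complex_of_real (r j) * cis (s+pi) = complex_of_real (- r j) * cis s"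
    by (simp add: minus_cis[symmetric])
  have rk: "0 < r k" "0 < r i" "0 < r j" using pos k iV jV by auto
  show "(r k < r i \<longrightarrow> l k < s) \<and> (r k < r j \<longrightarrow> l k < s + pi)"
  proof (intro conjI impI)
    assume "r k < r i"
    show "l k < s"
    proof (rule ccontr)
      assume "\<not> l k < s"
      then have "complex_of_real (r k) * cis s \<in> circ_arc (r k) 0 (l k)" using s by (intro arc_pt2) auto
      moreover have "complex_of_real (r k) * cis s \<in> closed_segment (complex_of_real (r i) * cis s) (complex_of_real (- r j) * cis s)"
        using rk \<open>r k < r i\<close> by (intro seg_pt) auto
      ultimately show False using avoid k q by auto
    qed
  next
    assume "r k < r j"
    show "l k < s + pi"
    proof (rule ccontr)
      assume "\<not> l k < s + pi"
      then have "complex_of_real (r k) * cis (s+pi) \<in> circ_arc (r k) 0 (l k)" using s pi_gt_zero by (intro arc_pt2) linarith+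
      moreover have "complex_of_real (r k) * cis (s+pi) = complex_of_real (- r k) * cis s"
        by (simp add: minus_cis[symmetric])
      moreover have "complex_of_real (- r k) * cis s \<in> closed_segment (complex_of_real (r i) * cis s) (complex_of_real (- r j) * cis s)"
        using rk \<open>r k < r j\<close> by (intro seg_pt) auto
      ultimately show False using avoid k q by auto
    qed
  qed
  qed
  then show ?thesis unfolding visB_def using s by blast
qed

lemma caseA:
  assumes pos: "\<forall>k\<in>V. 0 < r k \<and> l k < 2*pi"
    and s: "0 \<le> s" "s \<le> l i" "s \<le> l j"
    and avoid: "\<forall>k\<in>V - {i, j}. closed_segment (complex_of_real (r i) * cis s) (complex_of_real (r j) * cis s) \<inter> circ_arc (r k) 0 (l k) = {}"
  shows "visA V r l i j s"
  unfolding visA_def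
proof (intro conjI s ballI impI)
  fix k assume k: "k \<in> V - {i,j}" and btw: "(r i < r k \<and> r k < r j) \<or> (r j < r k \<and> r k < r i)"
  show "l k < s"
  proof (rule ccontr)
    assume "\<not> l k < s"
    then have "complex_of_real (r k) * cis s \<in> circ_arc (r k) 0 (l k)" using s by (intro arc_pt2) auto
    moreover have "complex_of_real (r k) * cis s \<in> closed_segment (complex_of_real (r i) * cis s) (complex_of_real (r j) * cis s)"
      using btw by (intro seg_pt) auto
    ultimately show False using avoid k by auto
  qed
qed

lemma edge_witness:
  assumes pos: "\<forall>k\<in>V. 0 < r k \<and> l k < 2*pi"
    and iV: "i \<in> V" and jV: "j \<in> V"
    and p: "p \<in> circ_arc (r i) 0 (l i)" and q: "q \<in> circ_arc (r j) 0 (l j)"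
    and rad: "radial_segment p q"
    and avoid: "\<forall>k\<in>V - {i, j}. closed_segment p q \<inter> circ_arc (r k) 0 (l k) = {}"
  shows "\<exists>s. visA V r l i j s \<or> visB V r l i j s \<or> visB V r l j i s"
proof -
  obtain s where s: "0 \<le> s" "s \<le> l i" "p = complex_of_real (r i) * cis s"
    using p by (auto simp: circ_arc_def)
  obtain t where t: "0 \<le> t" "t \<le> l j" "q = complex_of_real (r j) * cis t"
    using q by (auto simp: circ_arc_def)
  have ri: "0 < r i" "l i < 2*pi" and rj: "0 < r j" "l j < 2*pi" using pos iV jV by auto
  obtain u where u: "u \<noteq> 0" "closed_segment p q \<subseteq> {complex_of_real x * u | x. True}"
    using rad by (auto simp: radial_segment_def)
  obtain \<alpha> where \<alpha>: "p = complex_of_real \<alpha> * u" using u(2) ends_in_segment(1)[of p q] by blast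
  obtain \<beta> where \<beta>: "q = complex_of_real \<beta> * u" using u(2) ends_in_segment(2)[of p q] by blast
  have "p \<noteq> 0" using s ri by simp
  then have a0: "\<alpha> \<noteq> 0" using \<alpha> by auto
  define \<kappa> where "\<kappa> = \<beta> / \<alpha>"
  have qk: "q = complex_of_real \<kappa> * p" using \<alpha> \<beta> a0 by (simp add: \<kappa>_def field_simps)
  have eq: "complex_of_real (r j) * cis t = complex_of_real (\<kappa> * r i) * cis s"
    using qk s t by simp
  have "norm (complex_of_real (r j) * cis t) = norm (complex_of_real (\<kappa> * r i) * cis s)"
    using eq by simp
  then have nrm: "r j = \<bar>\<kappa>\<bar> * r i" using ri rj by (simp only: norm_mult norm_cis norm_of_real) (simp add: abs_mult)
  have k0: "\<kappa> \<noteq> 0" using nrm rj by auto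
  show ?thesis
  proof (cases "\<kappa> > 0")
    case True
    then have "r j = \<kappa> * r i" using nrm by simp
    then have "complex_of_real (r j) * cis t = complex_of_real (r j) * cis s" using eq by simp
    then have "cis t = cis s" using rj by simp
    then have ts: "t = s" using cis_inj[of t s] s t ri rj by linarith
    have "visA V r l i j s"
      by (rule caseA[OF pos]) (use s t ts avoid in auto)
    then show ?thesis by blast
  next
    case False
    then have "r j = - \<kappa> * r i" using nrm k0 by simp
    then have "complex_of_real (\<kappa> * r i) = - complex_of_real (r j)" by simp
    then have "complex_of_real (r j) * cis t = complex_of_real (r j) * (- cis s)" using eq
      by simp
    then have ceq: "cis t = - cis s" using rj mult_cancel_left[of "complex_of_real (r j)" "cis t" "- cis s"] by simp
    show ?thesis
    proof (cases "s < pi")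
      case True
      have "cis t = cis (s + pi)" using ceq minus_cis by simp
      then have ts: "t = s + pi" using cis_inj[of t "s+pi"] s t ri rj True by linarith
      have "visB V r l i j s"
        by (rule caseB[OF pos iV jV]) (use s t ts avoid in auto)
      then show ?thesis by blast
    next
      case False
      have "cis t = cis (s - pi)" using ceq minus_cis' by simp
      then have ts: "t = s - pi" using cis_inj[of t "s-pi"] s t ri rj False by linarith
      have "visB V r l j i t"
      proof (rule caseB[OF pos jV iV])
        show "0 \<le> t" "t \<le> l j" "t + pi \<le> l i" using t s ts by auto
        have "s = t + pi" using ts by simp
        then show "\<forall>k\<in>V - {j, i}. closed_segment (complex_of_real (r j) * cis t) (complex_of_real (r i) * cis (t + pi)) \<inter> circ_arc (r k) 0 (l k) = {}"
          using avoid s t by (simp add: closed_segment_commute insert_commute)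
      qed
      then show ?thesis by blast
    qed
  qed
qed



definition visW :: "'v set \<Rightarrow> ('v\<Rightarrow>real) \<Rightarrow> ('v\<Rightarrow>real) \<Rightarrow> 'v \<Rightarrow> 'v \<Rightarrow> bool" where
  "visW V r l i j \<longleftrightarrow> (\<exists>s. visA V r l i j s \<or> visB V r l i j s \<or> visB V r l j i s)"

lemma visA_sym: "visA V r l i j s = visA V r l j i s"
  unfolding visA_def by (auto simp: insert_commute)

lemma visW_sym: "visW V r l i j = visW V r l j i"
  unfolding visW_def by (metis visA_sym)

locale cfg =
  fixes V :: "'v set" and r l :: "'v \<Rightarrow> real" and c :: 'v and lam M :: real
  assumes pos: "\<forall>k\<in>V. 0 < r k \<and> l k < 2*pi"
    and rinj: "\<forall>a\<in>V. \<forall>b\<in>V. a \<noteq> b \<longrightarrow> r a \<noteq> r b"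
    and lmax: "\<forall>k\<in>V. l k \<le> lam"
    and lam2: "lam < 2*pi"
    and cV: "c \<in> V" and lc: "lam - pi \<le> l c"
    and below: "\<forall>k\<in>V. r k < r c \<longrightarrow> l k < lam - pi"
    and M: "\<forall>k\<in>V. r c < M - r k"
begin

definition rho :: "'v \<Rightarrow> real" where
  "rho k = (if r k \<le> r c then r k else M - r k)"

lemma FA:
  assumes "visA V r l i j s" "i \<in> V" "j \<in> V" "i \<noteq> c" "j \<noteq> c"
  shows "r i < r c \<longleftrightarrow> r j < r c"
proof (rule ccontr)
  assume "\<not> ?thesis"
  moreover have "r i \<noteq> r c" "r j \<noteq> r c" using rinj assms cV by auto
  ultimately have bt: "(r i < r c \<and> r c < r j) \<or> (r j < r c \<and> r c < r i)" by auto
  moreover have "c \<in> V - {i,j}" using assms cV by auto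
  ultimately have "l c < s" using assms(1) unfolding visA_def by blast
  moreover have "s \<le> l i" "s \<le> l j" using assms(1) unfolding visA_def by auto
  moreover have "l i < lam - pi \<or> l j < lam - pi"
    using below assms bt by auto
  ultimately show False using lc by linarith
qed

lemma FB:
  assumes "visB V r l i j s" "i \<in> V" "j \<in> V" "i \<noteq> c" "j \<noteq> c"
  shows "r i < r c \<and> r c < r j"
proof -
  have s: "0 \<le> s" "s \<le> l i" "s + pi \<le> l j" using assms(1) unfolding visB_def by auto
  have cc: "c \<in> V - {i,j}" using assms cV by auto
  have ne: "r i \<noteq> r c" "r j \<noteq> r c" using rinj assms cV by auto
  have "\<not> r c < r i"
  proof
    assume "r c < r i"
    then have "l c < s" using assms(1) cc unfolding visB_def by blast
    moreover have "l j \<le> lam" using lmax assms by auto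
    ultimately show False using s lc by linarith
  qed
  moreover have "\<not> r j < r c"
  proof
    assume "r j < r c"
    then have "l j < lam - pi" using below assms by auto
    then show False using s lam2 by linarith
  qed
  ultimately show ?thesis using ne by auto
qed

lemma rho_A: "r k < r c \<Longrightarrow> rho k = r k" unfolding rho_def by auto
lemma rho_S: "k \<in> V \<Longrightarrow> r c < r k \<Longrightarrow> rho k = M - r k \<and> r c < rho k" unfolding rho_def using M by auto

lemma orient:
  assumes "visW V r l i j" "i \<in> V" "j \<in> V" "i \<noteq> c" "j \<noteq> c" "rho i < rho j"
  shows "\<exists>s. visA V r l i j s \<or> visB V r l i j s"
proof -
  obtain s where "visA V r l i j s \<or> visB V r l i j s \<or> visB V r l j i s"
    using assms(1) unfolding visW_def by blast
  moreover have "\<not> visB V r l j i s"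
  proof
    assume "visB V r l j i s"
    then have "r j < r c" "r c < r i" using FB assms by auto
    then show False using rho_A rho_S assms by force
  qed
  ultimately show ?thesis by blast
qed

lemma no_interleave:
  assumes W1: "visW V r l i j" and W2: "visW V r l i' j'"
    and V: "i \<in> V" "j \<in> V" "i' \<in> V" "j' \<in> V"
    and nc: "i \<noteq> c" "j \<noteq> c" "i' \<noteq> c" "j' \<noteq> c"
    and ch: "rho i < rho i'" "rho i' < rho j" "rho j < rho j'"
  shows False
proof -
  have rne: "\<And>k. k \<in> V \<Longrightarrow> k \<noteq> c \<Longrightarrow> r k < r c \<or> r c < r k"
    using rinj cV by (meson linorder_neqE_linordered_idom)
  have d: "i \<noteq> i'" "i \<noteq> j" "i \<noteq> j'" "i' \<noteq> j" "i' \<noteq> j'" "j \<noteq> j'" using ch by auto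
  obtain s where e: "visA V r l i j s \<or> visB V r l i j s"
    using orient[OF W1 V(1,2) nc(1,2)] ch by force
  obtain s' where f: "visA V r l i' j' s' \<or> visB V r l i' j' s'"
    using orient[OF W2 V(3,4) nc(3,4)] ch by force
  have pi0: "0 < pi" by (rule pi_gt_zero)
  show False
  proof (cases "visA V r l i j s")
    case eA: True
    have ea: "s \<le> l i" "s \<le> l j" "\<forall>k\<in>V-{i,j}. (r i < r k \<and> r k < r j) \<or> (r j < r k \<and> r k < r i) \<longrightarrow> l k < s"
      using eA unfolding visA_def by auto
    show False
    proof (cases "visA V r l i' j' s'")
      case fA: True
      have fa: "s' \<le> l i'" "s' \<le> l j'" "\<forall>k\<in>V-{i',j'}. (r i' < r k \<and> r k < r j') \<or> (r j' < r k \<and> r k < r i') \<longrightarrow> l k < s'"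
        using fA unfolding visA_def by auto
      have s1: "r i < r c \<longleftrightarrow> r j < r c" using FA[OF eA V(1,2) nc(1,2)] .
      have s2: "r i' < r c \<longleftrightarrow> r j' < r c" using FA[OF fA V(3,4) nc(3,4)] .
      show False
      proof (cases "r i < r c")
        case True
        then have "r j < r c" using s1 by simp
        then have "rho j < r c" using rho_A by simp
        then have "r i' < r c" using ch rho_S[OF V(3)] rne[OF V(3) nc(3)] by force
        then have "r j' < r c" using s2 by simp
        have rr: "r i < r i'" "r i' < r j" "r j < r j'"
          using ch rho_A True \<open>r j < r c\<close> \<open>r i' < r c\<close> \<open>r j' < r c\<close> by auto
        have "l i' < s" using ea(3) V d rr by auto
        moreover have "l j < s'" using fa(3) V d rr by auto
        ultimately show False using ea fa by linarith
      next
        case False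
        then have i: "r c < r i" using rne[OF V(1) nc(1)] by blast
        then have "r c < r j" using s1 rne[OF V(2) nc(2)] by auto
        have "r c < r i'" using rne[OF V(3) nc(3)] rho_A[of i'] rho_S[OF V(1) i] ch by force
        then have "r c < r j'" using s2 rne[OF V(4) nc(4)] by auto
        have rr: "r i > r i'" "r i' > r j" "r j > r j'"
          using ch rho_S V i \<open>r c < r j\<close> \<open>r c < r i'\<close> \<open>r c < r j'\<close> by auto
        have "l i' < s" using ea(3) V d rr by auto
        moreover have "l j < s'" using fa(3) V d rr by auto
        ultimately show False using ea fa by linarith
      qed
    next
      case fnA: False
      then have fB: "visB V r l i' j' s'" using f by blast
      have fb: "s' \<le> l i'" "s' + pi \<le> l j'" "\<forall>k\<in>V-{i',j'}. (r k < r i' \<longrightarrow> l k < s') \<and> (r k < r j' \<longrightarrow> l k < s' + pi)"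
        using fB unfolding visB_def by auto
      have sf: "r i' < r c" "r c < r j'" using FB[OF fB V(3,4) nc(3,4)] by auto
      have "r i < r c"
      proof (rule ccontr)
        assume "\<not> r i < r c"
        then have "r c < r i" using rne[OF V(1) nc(1)] by blast
        then show False using rho_S[OF V(1)] rho_A[OF sf(1)] ch sf by force
      qed
      have s1: "r i < r c \<longleftrightarrow> r j < r c" using FA[OF eA V(1,2) nc(1,2)] .
      then have "r j < r c" using \<open>r i < r c\<close> by simp
      have rr: "r i < r i'" "r i' < r j" using ch rho_A \<open>r i < r c\<close> \<open>r j < r c\<close> sf by auto
      have "l i' < s" using ea(3) V d rr by auto
      moreover have "l i < s'" using fb(3) V d rr by auto
      ultimately show False using ea fb by linarith
    qed
  next
    case enA: False
    then have eB: "visB V r l i j s" using e by blast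
    have eb: "s \<le> l i" "s + pi \<le> l j" "\<forall>k\<in>V-{i,j}. (r k < r i \<longrightarrow> l k < s) \<and> (r k < r j \<longrightarrow> l k < s + pi)"
      using eB unfolding visB_def by auto
    have se: "r i < r c" "r c < r j" using FB[OF eB V(1,2) nc(1,2)] by auto
    show False
    proof (cases "visA V r l i' j' s'")
      case fA: True
      have fa: "s' \<le> l i'" "s' \<le> l j'" "\<forall>k\<in>V-{i',j'}. (r i' < r k \<and> r k < r j') \<or> (r j' < r k \<and> r k < r i') \<longrightarrow> l k < s'"
        using fA unfolding visA_def by auto
      have s2: "r i' < r c \<longleftrightarrow> r j' < r c" using FA[OF fA V(3,4) nc(3,4)] .
      have "r c < r j'"
      proof (rule ccontr)
        assume "\<not> r c < r j'"
        then have "r j' < r c" using rne[OF V(4) nc(4)] by blast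
        then show False using rho_S[OF V(2) se(2)] rho_A ch by force
      qed
      then have "r c < r i'" using s2 rne[OF V(3) nc(3)] by auto
      have rr: "r i' > r j" "r j > r j'"
        using ch rho_S V se \<open>r c < r i'\<close> \<open>r c < r j'\<close> by auto
      have "l j < s'" using fa(3) V d rr by auto
      moreover have "l j' < s + pi" using eb(3) V d rr by auto
      ultimately show False using eb fa by linarith
    next
      case fnA: False
      then have fB: "visB V r l i' j' s'" using f by blast
      have fb: "s' \<le> l i'" "s' + pi \<le> l j'" "\<forall>k\<in>V-{i',j'}. (r k < r i' \<longrightarrow> l k < s') \<and> (r k < r j' \<longrightarrow> l k < s' + pi)"
        using fB unfolding visB_def by auto
      have sf: "r i' < r c" "r c < r j'" using FB[OF fB V(3,4) nc(3,4)] by auto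
      have rr: "r i < r i'" "r j' < r j"
        using ch rho_A rho_S V se sf by auto
      have "l i < s'" using fb(3) V d rr by auto
      moreover have "l j' < s + pi" using eb(3) V d rr by auto
      ultimately show False using eb fb by linarith
    qed
  qed
qed

end


definition curve :: "real \<Rightarrow> real \<Rightarrow> real \<Rightarrow> real \<Rightarrow> complex" where
  "curve a b \<sigma> t = complex_of_real (a + t*(b-a)) + \<i> * complex_of_real (\<sigma> * (t*(b-a)) * ((1-t)*(b-a)))"

lemma curve_Re [simp]: "Re (curve a b \<sigma> t) = a + t*(b-a)" by (simp add: curve_def)
lemma curve_Im [simp]: "Im (curve a b \<sigma> t) = \<sigma> * (t*(b-a)) * ((1-t)*(b-a))" by (simp add: curve_def)

lemma curve_arc:
  assumes "a < b" shows "arc (curve a b \<sigma>)"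
  unfolding arc_def path_def
proof
  show "continuous_on {0..1} (curve a b \<sigma>)"
    unfolding curve_def by (intro continuous_intros)
  show "inj_on (curve a b \<sigma>) {0..1}"
  proof (rule inj_onI)
    fix x y assume "curve a b \<sigma> x = curve a b \<sigma> y"
    then have "Re (curve a b \<sigma> x) = Re (curve a b \<sigma> y)" by simp
    then show "x = y" using assms by simp
  qed
qed

lemma curve_start: "pathstart (curve a b \<sigma>) = complex_of_real a"
  by (simp add: pathstart_def curve_def)
lemma curve_finish: "pathfinish (curve a b \<sigma>) = complex_of_real b"
  by (simp add: pathfinish_def curve_def)

lemma curve_image:
  assumes "a < b"
  shows "z \<in> path_image (curve a b \<sigma>) \<longleftrightarrow> a \<le> Re z \<and> Re z \<le> b \<and> Im z = \<sigma>*(Re z - a)*(b - Re z)"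
proof
  assume "z \<in> path_image (curve a b \<sigma>)"
  then obtain t where t: "0 \<le> t" "t \<le> 1" "z = curve a b \<sigma> t" by (auto simp: path_image_def)
  have "0 \<le> t*(b-a)" "t*(b-a) \<le> b - a" using t assms by (auto simp: mult_left_le_one_le)
  moreover have "Im z = \<sigma>*(Re z - a)*(b - Re z)" using t by (simp add: algebra_simps)
  ultimately show "a \<le> Re z \<and> Re z \<le> b \<and> Im z = \<sigma>*(Re z - a)*(b - Re z)" using t by simp
next
  assume z: "a \<le> Re z \<and> Re z \<le> b \<and> Im z = \<sigma>*(Re z - a)*(b - Re z)"
  define t where "t = (Re z - a) / (b - a)"
  have t01: "0 \<le> t" "t \<le> 1" using z assms by (auto simp: t_def divide_simps)
  have tb: "t*(b-a) = Re z - a" using assms by (simp add: t_def)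
  have tb2: "(1-t)*(b-a) = b - Re z" using tb by (simp add: algebra_simps)
  have "curve a b \<sigma> t = z" using tb tb2 z by (simp add: complex_eq_iff)
  then show "z \<in> path_image (curve a b \<sigma>)" using t01 by (auto simp: path_image_def)
qed

lemma para_cross:
  fixes a b a' b' x :: real
  assumes "a < x" "x < b" "a' < x" "x < b'" "(a,b) \<noteq> (a',b')"
    and "\<not> (a < a' \<and> a' < b \<and> b < b')" "\<not> (a' < a \<and> a < b' \<and> b' < b)"
    and eq: "(x - a)*(b - x) = (x - a')*(b' - x)"
  shows False
proof -
  have id: "(x - a)*(b - x) - (x - a')*(b' - x) = (x - a')*(b - b') + (a' - a)*(b - x)"
    by (simp add: algebra_simps)
  have id2: "(x - a')*(b' - x) - (x - a)*(b - x) = (x - a)*(b' - b) + (a - a')*(b' - x)"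
    by (simp add: algebra_simps)
  consider "a \<le> a' \<and> b' \<le> b" | "a' \<le> a \<and> b \<le> b'" using assms by linarith
  then show False
  proof cases
    case 1
    have "a < a' \<or> b' < b" using 1 assms(5) by auto
    then have "0 < (x - a')*(b - b') + (a' - a)*(b - x)"
    proof
      assume h: "a < a'"
      have "0 \<le> (x - a')*(b - b')" using 1 assms by (intro mult_nonneg_nonneg) auto
      moreover have "0 < (a' - a)*(b - x)" using h assms by (intro mult_pos_pos) auto
      ultimately show ?thesis by linarith
    next
      assume h: "b' < b"
      have "0 < (x - a')*(b - b')" using h assms by (intro mult_pos_pos) auto
      moreover have "0 \<le> (a' - a)*(b - x)" using 1 assms by (intro mult_nonneg_nonneg) auto
      ultimately show ?thesis by linarith
    qed
    then show False using id eq by linarith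
  next
    case 2
    have "a' < a \<or> b < b'" using 2 assms(5) by auto
    then have "0 < (x - a)*(b' - b) + (a - a')*(b' - x)"
    proof
      assume h: "a' < a"
      have "0 \<le> (x - a)*(b' - b)" using 2 assms by (intro mult_nonneg_nonneg) auto
      moreover have "0 < (a - a')*(b' - x)" using h assms by (intro mult_pos_pos) auto
      ultimately show ?thesis by linarith
    next
      assume h: "b < b'"
      have "0 < (x - a)*(b' - b)" using h assms by (intro mult_pos_pos) auto
      moreover have "0 \<le> (a - a')*(b' - x)" using 2 assms by (intro mult_nonneg_nonneg) auto
      ultimately show ?thesis by linarith
    qed
    then show False using id2 eq by linarith
  qed
qed



lemma (in cfg) rho_inj: "inj_on rho V"
proof (rule inj_onI)
  fix x y assume xy: "x \<in> V" "y \<in> V" "rho x = rho y"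
  show "x = y"
  proof (rule ccontr)
    assume "x \<noteq> y"
    then have "r x \<noteq> r y" using rinj xy by auto
    then show False using xy M unfolding rho_def by (auto split: if_splits)
  qed
qed

lemma rep_facts:
  assumes "semi_arc_vis_rep V r l"
  shows "finite V" "\<forall>k\<in>V. 0 < r k \<and> l k < 2*pi" "\<forall>a\<in>V. \<forall>b\<in>V. a \<noteq> b \<longrightarrow> r a \<noteq> r b"
proof -
  show "finite V" "\<forall>k\<in>V. 0 < r k \<and> l k < 2*pi" using assms by (auto simp: semi_arc_vis_rep_def arc_vis_rep_def)
  show "\<forall>a\<in>V. \<forall>b\<in>V. a \<noteq> b \<longrightarrow> r a \<noteq> r b"
  proof (intro ballI impI)
    fix a b assume ab: "a \<in> V" "b \<in> V" "a \<noteq> b"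
    have "complex_of_real (r a) \<in> circ_arc (r a) 0 (l a)" "complex_of_real (r b) \<in> circ_arc (r b) 0 (l b)"
      using assms ab arc_pt2[of 0 "l a" "r a"] arc_pt2[of 0 "l b" "r b"]
      by (auto simp: semi_arc_vis_rep_def arc_vis_rep_def)
    moreover have "circ_arc (r a) 0 (l a) \<inter> circ_arc (r b) 0 (l b) = {}"
      using assms ab by (auto simp: semi_arc_vis_rep_def arc_vis_rep_def)
    ultimately show "r a \<noteq> r b" by auto
  qed
qed

lemma edge_facts:
  assumes "semi_arc_vis_rep V r l" "e \<in> arc_vis_edges V r (\<lambda>_. 0) l"
  shows "\<exists>i j. e = {i,j} \<and> i \<in> V \<and> j \<in> V \<and> i \<noteq> j \<and> visW V r l i j"
proof -
  obtain i j p q where ij: "e = {i,j}" "i \<in> V" "j \<in> V" "i \<noteq> j"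
    "p \<in> circ_arc (r i) 0 (l i)" "q \<in> circ_arc (r j) 0 (l j)" "radial_segment p q"
    "\<forall>k\<in>V - {i, j}. closed_segment p q \<inter> circ_arc (r k) 0 (l k) = {}"
    using assms(2) unfolding arc_vis_edges_def by blast
  have "visW V r l i j" unfolding visW_def
    using edge_witness[OF rep_facts(2)[OF assms(1)] ij(2,3,5-8)] .
  then show ?thesis using ij by blast
qed

lemma (in cfg) planar_main:
  assumes EF: "\<And>e. e \<in> E \<Longrightarrow> \<exists>i j. e = {i,j} \<and> i \<in> V \<and> j \<in> V \<and> i \<noteq> j \<and> visW V r l i j"
  shows "planar_graph V E"
proof -
  define P where "P k = complex_of_real (rho k)" for k
  define ea where "ea e = Min (rho ` e)" for e
  define eb where "eb e = Max (rho ` e)" for e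
  define sg where "sg e = (if c \<in> e then -1 else (1::real))" for e
  define \<gamma> where "\<gamma> e = curve (ea e) (eb e) (sg e)" for e
  have Pinj: "inj_on P V" using rho_inj unfolding P_def inj_on_def by auto
  have EN: "\<exists>i j. e = {i,j} \<and> i \<in> V \<and> j \<in> V \<and> rho i < rho j \<and> visW V r l i j \<and> ea e = rho i \<and> eb e = rho j"
    if e: "e \<in> E" for e
  proof -
    obtain i j where ij: "e = {i,j}" "i \<in> V" "j \<in> V" "i \<noteq> j" "visW V r l i j" using EF[OF e] by blast
    have "rho i \<noteq> rho j" using rho_inj ij unfolding inj_on_def by blast
    then show ?thesis
    proof (cases "rho i < rho j")
      case True
      then show ?thesis using ij by (intro exI[of _ i] exI[of _ j]) (auto simp: ea_def eb_def)
    next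
      case False
      then have "rho j < rho i" using \<open>rho i \<noteq> rho j\<close> by linarith
      then show ?thesis using ij visW_sym[of V r l i j]
        by (intro exI[of _ j] exI[of _ i]) (auto simp: ea_def eb_def insert_commute)
    qed
  qed
  have sg1: "sg e = 1 \<or> sg e = -1" for e unfolding sg_def by auto
  have C2: "\<exists>u v. e = {u, v} \<and> u \<noteq> v \<and> u \<in> V \<and> v \<in> V \<and>
            arc (\<gamma> e) \<and> pathstart (\<gamma> e) = P u \<and> pathfinish (\<gamma> e) = P v \<and>
            path_image (\<gamma> e) \<inter> P ` V = {P u, P v}" if e: "e \<in> E" for e
  proof -
    obtain i j where ij: "e = {i,j}" "i \<in> V" "j \<in> V" "rho i < rho j" "ea e = rho i" "eb e = rho j"
      using EN[OF e] by blast
    have arc: "arc (\<gamma> e)" unfolding \<gamma>_def using ij by (intro curve_arc) auto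
    have st: "pathstart (\<gamma> e) = P i" "pathfinish (\<gamma> e) = P j"
      unfolding \<gamma>_def P_def using ij curve_start curve_finish by auto
    have "path_image (\<gamma> e) \<inter> P ` V \<subseteq> {P i, P j}"
    proof
      fix z assume z: "z \<in> path_image (\<gamma> e) \<inter> P ` V"
      then obtain k where k: "k \<in> V" "z = P k" by auto
      have "Im z = sg e * (Re z - rho i) * (rho j - Re z)"
        using z ij curve_image[of "rho i" "rho j" z "sg e"] unfolding \<gamma>_def by auto
      moreover have "Im z = 0" "Re z = rho k" using k by (auto simp: P_def)
      ultimately have "rho k = rho i \<or> rho k = rho j" using sg1[of e] by auto
      then have "k = i \<or> k = j" using rho_inj k ij unfolding inj_on_def by blast
      then show "z \<in> {P i, P j}" using k by auto
    qed
    moreover have "{P i, P j} \<subseteq> path_image (\<gamma> e) \<inter> P ` V"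
      using st pathstart_in_path_image[of "\<gamma> e"] pathfinish_in_path_image[of "\<gamma> e"] ij by auto
    ultimately have "path_image (\<gamma> e) \<inter> P ` V = {P i, P j}" by blast
    moreover have "i \<noteq> j" using ij by auto
    ultimately show ?thesis using ij arc st by blast
  qed
  have C3: "path_image (\<gamma> e) \<inter> path_image (\<gamma> e') \<subseteq> P ` (e \<inter> e')"
    if e: "e \<in> E" and e': "e' \<in> E" and ne: "e \<noteq> e'" for e e'
  proof
    fix z assume z: "z \<in> path_image (\<gamma> e) \<inter> path_image (\<gamma> e')"
    obtain i j where ij: "e = {i,j}" "i \<in> V" "j \<in> V" "rho i < rho j" "ea e = rho i" "eb e = rho j" "visW V r l i j"
      using EN[OF e] by blast
    obtain i' j' where ij': "e' = {i',j'}" "i' \<in> V" "j' \<in> V" "rho i' < rho j'" "ea e' = rho i'" "eb e' = rho j'" "visW V r l i' j'"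
      using EN[OF e'] by blast
    define x where "x = Re z"
    have z1: "rho i \<le> x" "x \<le> rho j" "Im z = sg e * (x - rho i) * (rho j - x)"
      using z ij curve_image[of "rho i" "rho j" z "sg e"] unfolding \<gamma>_def x_def by auto
    have z2: "rho i' \<le> x" "x \<le> rho j'" "Im z = sg e' * (x - rho i') * (rho j' - x)"
      using z ij' curve_image[of "rho i'" "rho j'" z "sg e'"] unfolding \<gamma>_def x_def by auto
    show "z \<in> P ` (e \<inter> e')"
    proof (cases "Im z = 0")
      case True
      then have "(x - rho i) * (rho j - x) = 0" "(x - rho i') * (rho j' - x) = 0"
        using z1 z2 sg1[of e] sg1[of e'] by auto
      then have "x = rho i \<or> x = rho j" "x = rho i' \<or> x = rho j'" by auto
      then obtain w w' where w: "w \<in> e" "w' \<in> e'" "x = rho w" "x = rho w'" using ij ij' by blast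
      have "w \<in> V" "w' \<in> V" using w ij ij' by auto
      then have "w = w'" using w rho_inj unfolding inj_on_def by metis
      moreover have "z = P w" using True w unfolding P_def x_def by (simp add: complex_eq_iff)
      ultimately show ?thesis using w by auto
    next
      case False
      have p1: "0 < (x - rho i) * (rho j - x)"
      proof -
        have "(x - rho i) * (rho j - x) \<noteq> 0" using False z1 by auto
        moreover have "0 \<le> (x - rho i) * (rho j - x)" using z1 by auto
        ultimately show ?thesis by linarith
      qed
      have p2: "0 < (x - rho i') * (rho j' - x)"
      proof -
        have "(x - rho i') * (rho j' - x) \<noteq> 0" using False z2 by auto
        moreover have "0 \<le> (x - rho i') * (rho j' - x)" using z2 by auto
        ultimately show ?thesis by linarith
      qed
      have x1: "rho i < x" "x < rho j" using p1 z1 by (auto simp: zero_less_mult_iff)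
      have x2: "rho i' < x" "x < rho j'" using p2 z2 by (auto simp: zero_less_mult_iff)
      obtain m1 m2 where m: "m1 = (x - rho i) * (rho j - x)" "m2 = (x - rho i') * (rho j' - x)" by blast
      have im: "Im z = sg e * m1" "Im z = sg e' * m2" using z1(3) z2(3) m by (simp_all add: mult.assoc)
      have q1: "(sg e = 1 \<and> Im z > 0) \<or> (sg e = -1 \<and> Im z < 0)"
        using sg1[of e] im p1 m by auto
      have q2: "(sg e' = 1 \<and> Im z > 0) \<or> (sg e' = -1 \<and> Im z < 0)"
        using sg1[of e'] im p2 m by auto
      have "sg e = sg e'" using q1 q2 by auto
      then have same: "c \<in> e \<longleftrightarrow> c \<in> e'" unfolding sg_def by (auto split: if_splits)
      have eqp: "(x - rho i) * (rho j - x) = (x - rho i') * (rho j' - x)"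
        using z1(3) z2(3) \<open>sg e = sg e'\<close> sg1[of e] by auto
      have pne: "(rho i, rho j) \<noteq> (rho i', rho j')"
      proof
        assume "(rho i, rho j) = (rho i', rho j')"
        then have "i = i'" "j = j'" using rho_inj ij ij' unfolding inj_on_def by auto
        then show False using ne ij ij' by auto
      qed
      have ni: "\<not> (rho i < rho i' \<and> rho i' < rho j \<and> rho j < rho j') \<and>
                \<not> (rho i' < rho i \<and> rho i < rho j' \<and> rho j' < rho j)"
      proof (cases "c \<in> e")
        case True
        then have "c \<in> e'" using same by simp
        then have "rho c = rho i \<or> rho c = rho j" "rho c = rho i' \<or> rho c = rho j'"
          using True ij ij' by auto
        then show ?thesis by linarith
      next
        case False
        then have "c \<notin> e'" using same by simp
        then have nc: "i \<noteq> c" "j \<noteq> c" "i' \<noteq> c" "j' \<noteq> c" using False ij ij' by auto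
        show ?thesis
          using no_interleave[OF ij(7) ij'(7) ij(2,3) ij'(2,3) nc]
            no_interleave[OF ij'(7) ij(7) ij'(2,3) ij(2,3) nc(3,4,1,2)] by blast
      qed
      show ?thesis using para_cross[OF x1 x2 pne] ni eqp by blast
    qed
  qed
  show ?thesis unfolding planar_graph_def
  proof (intro exI[of _ P] exI[of _ \<gamma>] conjI ballI impI)
    show "inj_on P V" by (rule Pinj)
  next
    fix e assume "e \<in> E"
    then show "\<exists>u v. e = {u, v} \<and> u \<noteq> v \<and> u \<in> V \<and> v \<in> V \<and>
            arc (\<gamma> e) \<and> pathstart (\<gamma> e) = P u \<and> pathfinish (\<gamma> e) = P v \<and>
            path_image (\<gamma> e) \<inter> P ` V = {P u, P v}" by (rule C2)
  next
    fix e e' assume "e \<in> E" "e' \<in> E" "e \<noteq> e'"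
    then show "path_image (\<gamma> e) \<inter> path_image (\<gamma> e') \<subseteq> P ` (e \<inter> e')" by (rule C3)
  qed
qed

theorem mainTheorem1:
  fixes V :: "'v set" and r l :: "'v \<Rightarrow> real"
  assumes "semi_arc_vis_rep V r l"
  shows "planar_graph V (arc_vis_edges V r (\<lambda>_. 0) l)"
proof -
  have fin: "finite V" and pos: "\<forall>k\<in>V. 0 < r k \<and> l k < 2*pi"
    and rinj: "\<forall>a\<in>V. \<forall>b\<in>V. a \<noteq> b \<longrightarrow> r a \<noteq> r b"
    using rep_facts[OF assms] by auto
  have EF: "\<And>e. e \<in> arc_vis_edges V r (\<lambda>_. 0) l \<Longrightarrow> \<exists>i j. e = {i,j} \<and> i \<in> V \<and> j \<in> V \<and> i \<noteq> j \<and> visW V r l i j"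
    using edge_facts[OF assms] by blast
  show ?thesis
  proof (cases "V = {}")
    case True
    then have "arc_vis_edges V r (\<lambda>_. 0) l = {}" unfolding arc_vis_edges_def by auto
    then show ?thesis unfolding planar_graph_def using True by auto
  next
    case False
    define lam where "lam = Max (l ` V)"
    have lmax: "\<forall>k\<in>V. l k \<le> lam" using fin lam_def by auto
    have lamin: "lam \<in> l ` V" using fin False Max_in lam_def by auto
    then have lam2: "lam < 2*pi" using pos by auto
    define Cs where "Cs = {k\<in>V. lam - pi \<le> l k}"
    have Csne: "Cs \<noteq> {}" using lamin Cs_def by auto
    have Csfin: "finite Cs" using fin Cs_def by auto
    have "Min (r ` Cs) \<in> r ` Cs" using Csfin Csne by (intro Min_in) auto
    then obtain c where c: "c \<in> Cs" "r c = Min (r ` Cs)" by auto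
    have below: "\<forall>k\<in>V. r k < r c \<longrightarrow> l k < lam - pi"
    proof (intro ballI impI)
      fix k assume k: "k \<in> V" "r k < r c"
      show "l k < lam - pi"
      proof (rule ccontr)
        assume "\<not> l k < lam - pi"
        then have "k \<in> Cs" using k Cs_def by auto
        then have "Min (r ` Cs) \<le> r k" using Csfin by auto
        then show False using k c by linarith
      qed
    qed
    define M where "M = r c + Max (r ` V) + 1"
    have M: "\<forall>k\<in>V. r c < M - r k"
    proof
      fix k assume "k \<in> V"
      then have "r k \<le> Max (r ` V)" using fin by auto
      then show "r c < M - r k" unfolding M_def by linarith
    qed
    have cV: "c \<in> V" and lc: "lam - pi \<le> l c" using c Cs_def by auto
    interpret cfg V r l c lam M
      using pos rinj lmax lam2 cV lc below M by unfold_locales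
    show ?thesis using planar_main EF by blast
  qed
qed


end
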